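(* Let $n\ge1$, let $\Omega$ be the set of Borel probability measures on $[0,1]$, let $D(x_0,\dots,x_n;p)=\sum_{k=0}^n\binom{n}{k}p^k(1-p)^{n-k}|p-x_k|$ and $E(\sigma_0,\dots,\sigma_n;\mu)=\int\cdots\int D(x_0,\dots,x_n;p)\,d\sigma_0(x_0)\cdots d\sigma_n(x_n)\,d\mu(p)$. Let $\mu^*\in\Omega$ be an optimal distribution for the first player, i.e. $\mu^*$ attains $\max_{\mu\in\Omega}\min_{\sigma_0,\dots,\sigma_n\in\Omega}E(\sigma_0,\dots,\sigma_n;\mu)$, and let $f(p)=D(a_0,\dots,a_n;p)$ where $(a_0,\dots,a_n)\in[0,1]^{n+1}$ minimizes $\|D(x_0,\dots,x_n;\cdot)\|_\infty$ over $[0,1]^{n+1}$. Then $\operatorname{supp}\mu^*\subset M(f)=\{x\in[0,1]:f(x)=\|f\|_\infty\}$. *)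

theory Defs
  imports "HOL-Probability.Probability"
begin

text \<open>Borel probability measures on [0,1], represented as Borel probability
  measures on the real line concentrated on [0,1].\<close>
definition Omega :: "real measure set" where
  "Omega = {M. prob_space M \<and> sets M = sets borel \<and> emeasure M {0..1} = 1}"

definition D :: "nat \<Rightarrow> (nat \<Rightarrow> real) \<Rightarrow> real \<Rightarrow> real" where
  "D n x p = (\<Sum>k\<le>n. real (n choose k) * p ^ k * (1 - p) ^ (n - k) * \<bar>p - x k\<bar>)"

definition E :: "nat \<Rightarrow> (nat \<Rightarrow> real measure) \<Rightarrow> real measure \<Rightarrow> real" where
  "E n \<sigma> \<mu> = (\<integral>p. (\<integral>x. D n x p \<partial>(PiM {..n} \<sigma>)) \<partial>\<mu>)"

definition game_value :: "nat \<Rightarrow> real measure \<Rightarrow> real" where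
  "game_value n \<mu> = (INF \<sigma>\<in>({..n} \<rightarrow> Omega). E n \<sigma> \<mu>)"

definition supnorm :: "nat \<Rightarrow> (nat \<Rightarrow> real) \<Rightarrow> real" where
  "supnorm n x = (SUP p\<in>{0..1}. \<bar>D n x p\<bar>)"

definition msupport :: "real measure \<Rightarrow> real set" where
  "msupport M = {x. \<forall>e>0. emeasure M (ball x e) > 0}"

end

theory Submission
  imports Defs
begin


lemma exp_convex_bound:
  fixes e g :: real
  assumes "0 \<le> e" "0 \<le> g" "g \<le> 1"
  shows "exp (e * g) \<le> 1 + (exp e - 1) * g"
proof -
  have "convex_on UNIV exp" by (rule exp_convex)
  then have "exp ((1 - g) *\<^sub>R 0 + g *\<^sub>R e) \<le> (1 - g) * exp 0 + g * exp e"
    using assms by (intro convex_onD) auto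
  then show ?thesis by (simp add: algebra_simps)
qed

lemma hedge_core:
  fixes g :: "'x \<Rightarrow> 'p \<Rightarrow> real" and K :: "'x set" and P :: "'p set"
  assumes finP: "finite P" "P \<noteq> {}"
    and K: "K \<noteq> {}"
    and g01: "\<And>x p. x \<in> K \<Longrightarrow> p \<in> P \<Longrightarrow> 0 \<le> g x p \<and> g x p \<le> 1"
    and avg: "\<And>T xs. T > 0 \<Longrightarrow> (\<forall>t<T. xs t \<in> K) \<Longrightarrow> \<exists>y\<in>K. \<forall>p\<in>P. real T * g y p \<le> (\<Sum>t<T. g (xs t) p)"
    and cover: "\<And>x. x \<in> K \<Longrightarrow> \<exists>p\<in>P. c \<le> g x p"
    and eps: "\<epsilon> > 0"
  shows "\<exists>w. (\<forall>p\<in>P. 0 \<le> w p) \<and> (\<Sum>p\<in>P. w p) = 1 \<and> (\<forall>x\<in>K. c - \<epsilon> \<le> (\<Sum>p\<in>P. w p * g x p))"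
proof (rule ccontr)
  assume H: "\<not> ?thesis"
  define S where "S = (\<lambda>w. (\<forall>p\<in>P. 0 \<le> w p) \<and> (\<Sum>p\<in>P. w p) = (1::real))"
  have H': "\<And>w. S w \<Longrightarrow> \<exists>x\<in>K. (\<Sum>p\<in>P. w p * g x p) < c - \<epsilon>"
    using H unfolding S_def by (force simp: not_le)
  have "\<forall>w. \<exists>x. S w \<longrightarrow> x \<in> K \<and> (\<Sum>p\<in>P. w p * g x p) < c - \<epsilon>"
    using H' by blast
  then obtain sel where sel: "\<And>w. S w \<Longrightarrow> sel w \<in> K \<and> (\<Sum>p\<in>P. w p * g (sel w) p) < c - \<epsilon>"
    by metis
  have cardP: "card P > 0" using finP by auto
  have ceps: "0 \<le> c - \<epsilon>"
  proof (rule ccontr)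
    assume "\<not> 0 \<le> c - \<epsilon>"
    define u where "u = (\<lambda>p::'p. 1 / real (card P))"
    have "S u" using cardP unfolding S_def u_def by auto
    then obtain x where "x \<in> K" "(\<Sum>p\<in>P. u p * g x p) < c - \<epsilon>" using H' by blast
    moreover have "0 \<le> (\<Sum>p\<in>P. u p * g x p)"
      using g01[OF \<open>x \<in> K\<close>] unfolding u_def by (intro sum_nonneg) auto
    ultimately show False using \<open>\<not> 0 \<le> c - \<epsilon>\<close> by linarith
  qed
  obtain x0 where "x0 \<in> K" using K by blast
  then obtain p0 where "p0 \<in> P" "c \<le> g x0 p0" using cover by blast
  then have c1: "c \<le> 1" using g01[OF \<open>x0 \<in> K\<close> \<open>p0 \<in> P\<close>] by linarith
  define \<eta> where "\<eta> = \<epsilon> / 2"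
  have eta: "0 < \<eta>" "\<eta> \<le> 1" using eps ceps c1 unfolding \<eta>_def by auto
  define wts where "wts = (\<lambda>(H::'p \<Rightarrow> real) p. exp (\<eta> * H p) / (\<Sum>q\<in>P. exp (\<eta> * H q)))"
  have Spos: "(\<Sum>q\<in>P. exp (\<eta> * H q)) > 0" for H using finP by (intro sum_pos) auto
  have Swts: "S (wts H)" for H
    unfolding S_def wts_def using Spos[of H]
    by (auto simp: sum_divide_distrib[symmetric])
  define G where "G = rec_nat (\<lambda>p::'p. 0::real) (\<lambda>t H. \<lambda>p. H p + g (sel (wts H)) p)"
  define xt where "xt = (\<lambda>t. sel (wts (G t)))"
  have G0: "G 0 = (\<lambda>p. 0)" unfolding G_def by simp
  have GS: "G (Suc t) p = G t p + g (xt t) p" for t p unfolding G_def xt_def by simp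
  have xtK: "xt t \<in> K" for t using sel[OF Swts] unfolding xt_def by blast
  have Lt: "(\<Sum>p\<in>P. wts (G t) p * g (xt t) p) < c - \<epsilon>" for t
    using sel[OF Swts] unfolding xt_def by blast
  have Gsum: "G t p = (\<Sum>s<t. g (xt s) p)" for t p
    by (induction t) (simp_all add: G0 GS)
  define \<Phi> where "\<Phi> = (\<lambda>t. \<Sum>p\<in>P. exp (\<eta> * G t p))"
  define r where "r = exp ((exp \<eta> - 1) * (c - \<epsilon>))"
  have em1: "0 \<le> exp \<eta> - 1" using eta by simp
  have step: "\<Phi> (Suc t) \<le> \<Phi> t * r" for t
  proof -
    have "\<Phi> (Suc t) = (\<Sum>p\<in>P. exp (\<eta> * G t p) * exp (\<eta> * g (xt t) p))"
      unfolding \<Phi>_def GS by (simp add: distrib_left exp_add)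
    also have "\<dots> \<le> (\<Sum>p\<in>P. exp (\<eta> * G t p) * (1 + (exp \<eta> - 1) * g (xt t) p))"
      using g01[OF xtK] eta by (intro sum_mono mult_left_mono exp_convex_bound) auto
    also have "\<dots> = \<Phi> t + (exp \<eta> - 1) * (\<Sum>p\<in>P. exp (\<eta> * G t p) * g (xt t) p)"
      unfolding \<Phi>_def by (simp add: algebra_simps sum.distrib sum_distrib_left sum_subtractf)
    also have "(\<Sum>p\<in>P. exp (\<eta> * G t p) * g (xt t) p) = \<Phi> t * (\<Sum>p\<in>P. wts (G t) p * g (xt t) p)"
      unfolding \<Phi>_def wts_def using Spos[of "G t"]
      by (simp add: sum_distrib_left)
    also have "\<Phi> t + (exp \<eta> - 1) * (\<Phi> t * (\<Sum>p\<in>P. wts (G t) p * g (xt t) p))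
        \<le> \<Phi> t + (exp \<eta> - 1) * (\<Phi> t * (c - \<epsilon>))"
      using Lt[of t] em1 Spos[of "G t"] unfolding \<Phi>_def
      by (intro add_left_mono mult_left_mono) auto
    also have "\<dots> = \<Phi> t * (1 + (exp \<eta> - 1) * (c - \<epsilon>))" by (simp add: algebra_simps)
    also have "\<dots> \<le> \<Phi> t * r"
      unfolding r_def using Spos[of "G t"] unfolding \<Phi>_def
      by (intro mult_left_mono) (auto simp: add.commute)
    finally show ?thesis .
  qed
  have r0: "0 \<le> r" unfolding r_def by simp
  have bound: "\<Phi> t \<le> real (card P) * r ^ t" for t
  proof (induction t)
    case 0 then show ?case by (simp add: \<Phi>_def G0)
  next
    case (Suc t)
    have "\<Phi> (Suc t) \<le> \<Phi> t * r" by (rule step)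
    also have "\<dots> \<le> real (card P) * r ^ t * r" using Suc r0 by (intro mult_right_mono) auto
    finally show ?case by (simp add: algebra_simps)
  qed
  obtain T :: nat where T: "2 * ln (real (card P)) / (\<eta> * \<epsilon>) < real T"
    using reals_Archimedean2 by blast
  have lnP: "0 \<le> ln (real (card P))" using cardP by simp
  have Tpos: "T > 0"
    proof (rule ccontr)
    assume "\<not> T > 0"
    then have "T = 0" by simp
    have "0 \<le> 2 * ln (real (card P)) / (\<eta> * \<epsilon>)"
      using lnP eta eps by (intro divide_nonneg_nonneg) auto
    then show False using T \<open>T = 0\<close> by simp
  qed
  obtain y where "y \<in> K" and y: "\<forall>p\<in>P. real T * g y p \<le> (\<Sum>t<T. g (xt t) p)"
    using avg[OF Tpos, of xt] xtK by blast
  obtain p where "p \<in> P" "c \<le> g y p" using cover[OF \<open>y \<in> K\<close>] by blast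
  have "real T * c \<le> G T p" using y \<open>p \<in> P\<close> \<open>c \<le> g y p\<close> Gsum[of T p]
  proof -
    have "real T * c \<le> real T * g y p"
      using \<open>c \<le> g y p\<close> by (intro mult_left_mono) auto
    then show ?thesis using y \<open>p \<in> P\<close> Gsum[of T p] by auto
  qed
  have "exp (\<eta> * (real T * c)) \<le> exp (\<eta> * G T p)"
    using \<open>real T * c \<le> G T p\<close> eta by simp
  also have "\<dots> \<le> \<Phi> T" unfolding \<Phi>_def
    using finP \<open>p \<in> P\<close> by (intro member_le_sum) auto
  also have "\<dots> \<le> real (card P) * r ^ T" by (rule bound)
  also have "\<dots> = exp (ln (real (card P)) + real T * ((exp \<eta> - 1) * (c - \<epsilon>)))"
    using cardP unfolding r_def by (simp add: exp_add exp_of_nat_mult)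
  finally have "\<eta> * (real T * c) \<le> ln (real (card P)) + real T * ((exp \<eta> - 1) * (c - \<epsilon>))"
    by simp
  moreover have "(exp \<eta> - 1) * (c - \<epsilon>) \<le> (\<eta> + \<eta>^2) * (c - \<epsilon>)"
    using exp_bound[of \<eta>] eta ceps by (intro mult_right_mono) auto
  moreover have "(\<eta> + \<eta>^2) * (c - \<epsilon>) \<le> \<eta> * (c - \<epsilon>) + \<eta>^2"
  proof -
    have "\<eta>^2 * (c - \<epsilon>) \<le> \<eta>^2" using c1 eps by (intro mult_left_le) auto
    then show ?thesis by (simp add: distrib_right)
  qed
  ultimately have le1: "(exp \<eta> - 1) * (c - \<epsilon>) \<le> \<eta> * (c - \<epsilon>) + \<eta>^2"
    and le0: "\<eta> * (real T * c) \<le> ln (real (card P)) + real T * ((exp \<eta> - 1) * (c - \<epsilon>))"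
    by linarith+
  have "real T * ((exp \<eta> - 1) * (c - \<epsilon>)) \<le> real T * (\<eta> * (c - \<epsilon>) + \<eta>^2)"
    using le1 by (intro mult_left_mono) auto
  with le0 have "\<eta> * (real T * c) \<le> ln (real (card P)) + real T * (\<eta> * (c - \<epsilon>) + \<eta>^2)"
    by linarith
  then have "real T * \<eta> * (\<epsilon> - \<eta>) \<le> ln (real (card P))"
    by (simp add: algebra_simps power2_eq_square)
  then have "real T * (\<eta> * \<epsilon>) \<le> 2 * ln (real (card P))"
    unfolding \<eta>_def by (simp add: algebra_simps)
  moreover have "2 * ln (real (card P)) < real T * (\<eta> * \<epsilon>)"
    using T eta eps by (simp add: divide_less_eq mult.commute)
  ultimately show False by linarith
qed



lemma D_nonneg: "0 \<le> p \<Longrightarrow> p \<le> 1 \<Longrightarrow> 0 \<le> D n x p"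
  unfolding D_def by (intro sum_nonneg) auto

lemma bern_sum: "(\<Sum>k\<le>n. real (n choose k) * p ^ k * (1 - p) ^ (n - k)) = 1"
  using binomial_ring[of p "1 - p" n] by simp

lemma D_le1:
  assumes "0 \<le> p" "p \<le> 1" "x \<in> {..n} \<rightarrow> {0..1}"
  shows "D n x p \<le> 1"
proof -
  have "D n x p \<le> (\<Sum>k\<le>n. real (n choose k) * p ^ k * (1 - p) ^ (n - k))"
    unfolding D_def
  proof (intro sum_mono)
    fix k assume "k \<in> {..n}"
    then have "\<bar>p - x k\<bar> \<le> 1" using assms by (auto simp: Pi_def abs_le_iff)
    moreover have "0 \<le> real (n choose k) * p ^ k * (1 - p) ^ (n - k)" using assms by auto
    ultimately show "real (n choose k) * p ^ k * (1 - p) ^ (n - k) * \<bar>p - x k\<bar>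
        \<le> real (n choose k) * p ^ k * (1 - p) ^ (n - k)"
      by (simp add: mult_left_le)
  qed
  then show ?thesis using bern_sum[of n p] by simp
qed

lemma D_restrict: "D n (restrict x {..n}) p = D n x p"
  unfolding D_def by (intro sum.cong) auto

lemma D_avg:
  assumes T: "T > 0" and xs: "\<forall>t<T. xs t \<in> {..n} \<rightarrow> {0..1}" and p: "0 \<le> p" "p \<le> 1"
  shows "real T * D n (\<lambda>k. (\<Sum>t<T. xs t k) / real T) p \<le> (\<Sum>t<T. D n (xs t) p)"
proof -
  have "real T * D n (\<lambda>k. (\<Sum>t<T. xs t k) / real T) p
      = (\<Sum>k\<le>n. real (n choose k) * p ^ k * (1 - p) ^ (n - k) * (real T * \<bar>p - (\<Sum>t<T. xs t k) / real T\<bar>))"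
    unfolding D_def by (simp add: sum_distrib_left algebra_simps)
  also have "\<dots> \<le> (\<Sum>k\<le>n. real (n choose k) * p ^ k * (1 - p) ^ (n - k) * (\<Sum>t<T. \<bar>p - xs t k\<bar>))"
  proof (intro sum_mono mult_left_mono)
    fix k
    have "real T * \<bar>p - (\<Sum>t<T. xs t k) / real T\<bar> = \<bar>real T * (p - (\<Sum>t<T. xs t k) / real T)\<bar>"
      by (simp add: abs_mult)
    also have "real T * (p - (\<Sum>t<T. xs t k) / real T) = real T * p - (\<Sum>t<T. xs t k)"
      using T by (simp add: field_simps)
    also have "real T * p - (\<Sum>t<T. xs t k) = (\<Sum>t<T. p - xs t k)"
      by (simp add: sum_subtractf)
    also have "\<bar>\<dots>\<bar> \<le> (\<Sum>t<T. \<bar>p - xs t k\<bar>)" by (rule sum_abs)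
    finally show "real T * \<bar>p - (\<Sum>t<T. xs t k) / real T\<bar> \<le> (\<Sum>t<T. \<bar>p - xs t k\<bar>)" .
  qed (use p in auto)
  also have "\<dots> = (\<Sum>t<T. D n (xs t) p)"
    unfolding D_def by (simp add: sum_distrib_left sum.swap[of _ "{..<T}"])
  finally show ?thesis .
qed

lemma pow_lip:
  fixes a b :: real
  assumes "0 \<le> a" "a \<le> 1" "0 \<le> b" "b \<le> 1"
  shows "\<bar>a ^ k - b ^ k\<bar> \<le> real k * \<bar>a - b\<bar>"
proof (induction k)
  case 0 then show ?case by simp
next
  case (Suc k)
  have "a ^ Suc k - b ^ Suc k = a * (a ^ k - b ^ k) + b ^ k * (a - b)"
    by (simp add: algebra_simps)
  then have "\<bar>a ^ Suc k - b ^ Suc k\<bar> \<le> \<bar>a\<bar> * \<bar>a ^ k - b ^ k\<bar> + \<bar>b ^ k\<bar> * \<bar>a - b\<bar>"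
    by (metis abs_mult abs_triangle_ineq)
  also have "\<dots> \<le> 1 * \<bar>a ^ k - b ^ k\<bar> + 1 * \<bar>a - b\<bar>"
    using assms by (intro add_mono mult_right_mono) (auto simp: power_le_one)
  also have "\<dots> \<le> real k * \<bar>a - b\<bar> + \<bar>a - b\<bar>" using Suc by simp
  finally show ?case by (simp add: algebra_simps)
qed

lemma prod3_lip:
  fixes u1 u2 v1 v2 z1 z2 :: real
  assumes "0 \<le> u1" "u1 \<le> 1" "0 \<le> u2" "u2 \<le> 1" "0 \<le> v1" "v1 \<le> 1" "0 \<le> v2" "v2 \<le> 1"
    "0 \<le> z1" "z1 \<le> 1" "0 \<le> z2" "z2 \<le> 1"
  shows "\<bar>u1 * v1 * z1 - u2 * v2 * z2\<bar> \<le> \<bar>u1 - u2\<bar> + \<bar>v1 - v2\<bar> + \<bar>z1 - z2\<bar>"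
proof -
  have e: "u1 * v1 * z1 - u2 * v2 * z2 = (u1 - u2) * (v1 * z1) + u2 * (v1 - v2) * z1 + u2 * v2 * (z1 - z2)"
    by (simp add: algebra_simps)
  have "\<bar>(u1 - u2) * (v1 * z1)\<bar> \<le> \<bar>u1 - u2\<bar>"
    using assms by (simp add: abs_mult mult_le_one mult_left_le)
  moreover have "\<bar>u2 * (v1 - v2) * z1\<bar> \<le> \<bar>v1 - v2\<bar>"
    using assms by (simp add: abs_mult) (metis abs_ge_zero mult.commute mult.left_commute mult_le_one mult_left_le order.refl)
  moreover have "\<bar>u2 * v2 * (z1 - z2)\<bar> \<le> \<bar>z1 - z2\<bar>"
    using assms by (simp add: abs_mult) (intro mult_left_le_one_le, auto simp: mult_le_one)
  ultimately show ?thesis unfolding e by (smt (verit) abs_triangle_ineq)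
qed

lemma D_lip:
  assumes x: "x \<in> {..n} \<rightarrow> {0..1}" and p: "0 \<le> p" "p \<le> 1" and q: "0 \<le> q" "q \<le> 1"
  shows "\<bar>D n x p - D n x q\<bar> \<le> 2 ^ n * real (n + 1) * \<bar>p - q\<bar>"
proof -
  have "D n x p - D n x q = (\<Sum>k\<le>n. real (n choose k) *
      (p ^ k * (1 - p) ^ (n - k) * \<bar>p - x k\<bar> - q ^ k * (1 - q) ^ (n - k) * \<bar>q - x k\<bar>))"
    unfolding D_def by (simp add: sum_subtractf[symmetric] algebra_simps)
  also have "\<bar>\<dots>\<bar> \<le> (\<Sum>k\<le>n. real (n choose k) * (real (n + 1) * \<bar>p - q\<bar>))"
  proof (rule order_trans[OF sum_abs], intro sum_mono)
    fix k assume k: "k \<in> {..n}"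
    have xk: "0 \<le> x k" "x k \<le> 1" using x k by auto
    have "\<bar>p ^ k * (1 - p) ^ (n - k) * \<bar>p - x k\<bar> - q ^ k * (1 - q) ^ (n - k) * \<bar>q - x k\<bar>\<bar>
        \<le> \<bar>p ^ k - q ^ k\<bar> + \<bar>(1 - p) ^ (n - k) - (1 - q) ^ (n - k)\<bar> + \<bar>\<bar>p - x k\<bar> - \<bar>q - x k\<bar>\<bar>"
      using p q xk by (intro prod3_lip) (auto simp: power_le_one)
    also have "\<dots> \<le> real k * \<bar>p - q\<bar> + real (n - k) * \<bar>(1 - p) - (1 - q)\<bar> + \<bar>p - q\<bar>"
      using p q by (intro add_mono pow_lip) auto
    also have "\<dots> = real (n + 1) * \<bar>p - q\<bar>"
      using k by (simp add: algebra_simps abs_minus_commute of_nat_diff)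
    finally have "\<bar>p ^ k * (1 - p) ^ (n - k) * \<bar>p - x k\<bar> - q ^ k * (1 - q) ^ (n - k) * \<bar>q - x k\<bar>\<bar>
        \<le> real (n + 1) * \<bar>p - q\<bar>" .
    then show "\<bar>real (n choose k) * (p ^ k * (1 - p) ^ (n - k) * \<bar>p - x k\<bar> - q ^ k * (1 - q) ^ (n - k) * \<bar>q - x k\<bar>)\<bar>
        \<le> real (n choose k) * (real (n + 1) * \<bar>p - q\<bar>)"
      by (simp add: abs_mult mult_left_mono)
  qed
  also have "\<dots> = 2 ^ n * real (n + 1) * \<bar>p - q\<bar>"
    by (simp add: sum_distrib_right[symmetric] choose_row_sum[of n, symmetric] del: of_nat_Suc)
      (metis choose_row_sum of_nat_numeral of_nat_power of_nat_sum)
  finally show ?thesis .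
qed



lemma Omega_D: "\<mu> \<in> Omega \<Longrightarrow> prob_space \<mu> \<and> sets \<mu> = sets borel \<and> emeasure \<mu> {0..1} = 1"
  unfolding Omega_def by auto

lemma Omega_AE:
  assumes "\<mu> \<in> Omega" shows "AE p in \<mu>. p \<in> {0..1}"
proof -
  interpret prob_space \<mu> using Omega_D[OF assms] by auto
  have "prob {0..1} = 1" using Omega_D[OF assms] by (simp add: measure_def)
  then show ?thesis by (rule AE_prob_1)
qed

lemma sets_PiM_Omega:
  fixes n :: nat
  assumes "\<sigma> \<in> {..n} \<rightarrow> Omega"
  shows "sets (PiM {..n} \<sigma>) = sets (PiM {..n} (\<lambda>_. borel))"
  using assms by (intro sets_PiM_cong) (auto dest: Omega_D)

lemma prob_PiM_Omega:
  fixes n :: nat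
  assumes "\<sigma> \<in> {..n} \<rightarrow> Omega"
  shows "prob_space (PiM {..n} \<sigma>)"
  using assms by (intro prob_space_PiM) (auto dest: Omega_D)

lemma D_meas_borel: "(\<lambda>x. D n x p) \<in> borel_measurable (PiM {..n} (\<lambda>_. borel))"
  unfolding D_def by measurable

lemma D_meas2_borel: "(\<lambda>(p, x). D n x p) \<in> borel_measurable (borel \<Otimes>\<^sub>M PiM {..n} (\<lambda>_. borel))"
  unfolding D_def by measurable

lemma D_meas:
  assumes "\<sigma> \<in> {..n} \<rightarrow> Omega"
  shows "(\<lambda>x. D n x p) \<in> borel_measurable (PiM {..n} \<sigma>)"
  using D_meas_borel measurable_cong_sets[OF sets_PiM_Omega[OF assms] refl] by blast

lemma D_meas2:
  assumes "\<sigma> \<in> {..n} \<rightarrow> Omega"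
  shows "(\<lambda>(p, x). D n x p) \<in> borel_measurable (borel \<Otimes>\<^sub>M PiM {..n} \<sigma>)"
proof -
  have "sets (borel \<Otimes>\<^sub>M PiM {..n} \<sigma>) = sets (borel \<Otimes>\<^sub>M PiM {..n} (\<lambda>_. borel))"
    using sets_PiM_Omega[OF assms] by (intro sets_pair_measure_cong) auto
  then show ?thesis using D_meas2_borel measurable_cong_sets by blast
qed

lemma PiM_AE:
  fixes n :: nat
  assumes s: "\<sigma> \<in> {..n} \<rightarrow> Omega"
  shows "AE x in PiM {..n} \<sigma>. x \<in> {..n} \<rightarrow> {0..1}"
proof -
  define \<sigma>' where "\<sigma>' = (\<lambda>i. if i \<le> n then \<sigma> i else return borel (0::real))"
  have eq: "PiM {..n} \<sigma> = PiM {..n} \<sigma>'"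
    unfolding \<sigma>'_def by (intro PiM_cong) auto
  have ps: "prob_space (\<sigma>' i)" for i
    using s unfolding \<sigma>'_def by (auto dest: Omega_D intro: prob_space_return)
  interpret product_prob_space \<sigma>'
    unfolding product_prob_space_def product_prob_space_axioms_def product_sigma_finite_def
    using ps by (auto intro: prob_space_imp_sigma_finite)
  interpret Q: prob_space "PiM {..n} \<sigma>'" by (rule prob_space_PiM) (rule ps)
  have "emeasure (PiM {..n} \<sigma>') (Pi\<^sub>E {..n} (\<lambda>_. {0..1})) = (\<Prod>i\<le>n. emeasure (\<sigma>' i) {0..1})"
  proof (intro emeasure_PiM)
    fix i assume "i \<in> {..n}"
    then have "sets (\<sigma> i) = sets borel" using s by (auto simp: Pi_def Omega_def)
    then show "{0..1} \<in> sets (\<sigma>' i)" using \<open>i \<in> {..n}\<close> by (simp add: \<sigma>'_def)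
  qed simp
  also have "\<dots> = 1" using s by (intro prod.neutral) (auto simp: \<sigma>'_def dest!: Omega_D)
  finally have "Q.prob (Pi\<^sub>E {..n} (\<lambda>_. {0..1})) = 1" by (simp add: measure_def)
  then have "AE x in PiM {..n} \<sigma>'. x \<in> Pi\<^sub>E {..n} (\<lambda>_. {0..1})" by (rule Q.AE_prob_1)
  then show ?thesis unfolding eq by (rule AE_mp) (auto simp: PiE_def)
qed

lemma D_integrable:
  assumes s: "\<sigma> \<in> {..n} \<rightarrow> Omega" and p: "0 \<le> p" "p \<le> 1"
  shows "integrable (PiM {..n} \<sigma>) (\<lambda>x. D n x p)"
proof -
  interpret prob_space "PiM {..n} \<sigma>" by (rule prob_PiM_Omega[OF s])
  show ?thesis
  proof (rule integrable_const_bound[where B=1])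
    show "AE x in PiM {..n} \<sigma>. norm (D n x p) \<le> 1"
      using PiM_AE[OF s] by (rule AE_mp) (use p D_nonneg D_le1 in auto)
  qed (rule D_meas[OF s])
qed

lemma E_nonneg:
  assumes "\<mu> \<in> Omega" "\<sigma> \<in> {..n} \<rightarrow> Omega"
  shows "0 \<le> E n \<sigma> \<mu>"
  unfolding E_def
  apply (rule integral_nonneg_AE)
  apply (rule AE_mp[OF Omega_AE[OF assms(1)]])
  apply (rule AE_I2)
  apply (auto intro!: integral_nonneg_AE AE_I2 D_nonneg)
  done

lemma return_Omega: "0 \<le> c \<Longrightarrow> c \<le> 1 \<Longrightarrow> return borel (c::real) \<in> Omega"
  unfolding Omega_def by (auto intro: prob_space_return)

lemma game_value_le:
  assumes mu: "\<mu> \<in> Omega" and a: "a \<in> {..n} \<rightarrow> {0..1}"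
  shows "game_value n \<mu> \<le> (\<integral>p. D n a p \<partial>\<mu>)"
proof -
  define \<sigma> where "\<sigma> = (\<lambda>k. return borel (a k))"
  have s: "\<sigma> \<in> {..n} \<rightarrow> Omega" using a unfolding \<sigma>_def by (auto simp: Pi_def intro!: return_Omega)
  have "PiM {..n} \<sigma> = return (PiM {..n} (\<lambda>_. borel)) (restrict a {..n})"
    unfolding \<sigma>_def by (rule PiM_return) auto
  moreover have "(\<integral>x. D n x p \<partial>return (PiM {..n} (\<lambda>_. borel)) (restrict a {..n})) = D n a p" for p
    by (subst integral_return[OF _ D_meas_borel]) (auto simp: D_restrict space_PiM)
  ultimately have "E n \<sigma> \<mu> = (\<integral>p. D n a p \<partial>\<mu>)"
    unfolding E_def by simp
  moreover have "game_value n \<mu> \<le> E n \<sigma> \<mu>"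
    unfolding game_value_def
    by (rule cINF_lower[OF _ s]) (auto intro!: bdd_belowI[where m=0] E_nonneg[OF mu])
  ultimately show ?thesis by simp
qed



lemma weights_measure:
  fixes P :: "real set" and w :: "real \<Rightarrow> real"
  assumes finP: "finite P" and P01: "P \<subseteq> {0..1}" and wn: "\<forall>p\<in>P. 0 \<le> w p" and ws: "(\<Sum>p\<in>P. w p) = 1"
  shows "\<exists>\<mu>\<in>Omega. \<forall>h. h \<in> borel_measurable borel \<longrightarrow> (\<integral>p. h p \<partial>\<mu>) = (\<Sum>p\<in>P. w p * h p)"
proof -
  define w' where "w' = (\<lambda>p. if p \<in> P then w p else 0)"
  have nn: "\<And>x. 0 \<le> w' x" using wn unfolding w'_def by auto
  have pr: "(\<integral>\<^sup>+x. ennreal (w' x) \<partial>count_space UNIV) = 1"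
  proof -
    have "(\<integral>\<^sup>+x. ennreal (w' x) \<partial>count_space UNIV) = (\<Sum>x\<in>P. ennreal (w' x))"
      using finP by (intro nn_integral_count_space') (auto simp: w'_def)
    also have "\<dots> = ennreal (\<Sum>x\<in>P. w' x)" using nn by simp
    also have "(\<Sum>x\<in>P. w' x) = 1" using ws unfolding w'_def by simp
    finally show ?thesis by simp
  qed
  define q where "q = embed_pmf w'"
  have pmfq: "pmf q x = w' x" for x unfolding q_def by (rule pmf_embed_pmf[OF nn pr])
  have setq: "set_pmf q \<subseteq> P" unfolding q_def set_embed_pmf[OF nn pr] by (auto simp: w'_def)
  define \<mu> where "\<mu> = distr (measure_pmf q) borel id"
  have "prob_space \<mu>" unfolding \<mu>_def by (rule measure_pmf.prob_space_distr) simp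
  moreover have "sets \<mu> = sets borel" unfolding \<mu>_def by simp
  moreover have "emeasure \<mu> {0..1} = 1"
  proof -
    have "emeasure \<mu> {0..1} = emeasure (measure_pmf q) {0..1}"
      unfolding \<mu>_def by (subst emeasure_distr) auto
    also have "\<dots> = ennreal (measure_pmf.prob q {0..1})"
      by (simp add: measure_pmf.emeasure_eq_measure)
    also have "measure_pmf.prob q {0..1} = 1"
      using setq P01 by (subst measure_pmf.prob_eq_1) (auto simp: AE_measure_pmf_iff)
    finally show ?thesis by simp
  qed
  ultimately have "\<mu> \<in> Omega" unfolding Omega_def by auto
  moreover have "(\<integral>p. h p \<partial>\<mu>) = (\<Sum>p\<in>P. w p * h p)" if h: "h \<in> borel_measurable borel" for h
  proof -
    have "(\<integral>p. h p \<partial>\<mu>) = (\<integral>p. h p \<partial>measure_pmf q)"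
      unfolding \<mu>_def by (subst integral_distr[OF _ h]) auto
    also have "\<dots> = (\<Sum>a\<in>P. h a * pmf q a)"
      using setq finP by (intro integral_measure_pmf_real) auto
    finally show ?thesis by (simp add: pmfq w'_def mult.commute)
  qed
  ultimately show ?thesis by blast
qed

lemma game_value_ge:
  fixes P :: "real set" and w :: "real \<Rightarrow> real"
  assumes finP: "finite P" and P01: "P \<subseteq> {0..1}" and wn: "\<forall>p\<in>P. 0 \<le> w p" and ws: "(\<Sum>p\<in>P. w p) = 1"
    and good: "\<forall>x\<in>{..n} \<rightarrow> {0..1}. c \<le> (\<Sum>p\<in>P. w p * D n x p)"
  shows "\<exists>\<mu>\<in>Omega. c \<le> game_value n \<mu>"
proof -
  obtain \<mu> where mu: "\<mu> \<in> Omega" and int: "\<And>h. h \<in> borel_measurable borel \<Longrightarrow> (\<integral>p. h p \<partial>\<mu>) = (\<Sum>p\<in>P. w p * h p)"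
    using weights_measure[OF finP P01 wn ws] by blast
  have "c \<le> E n \<sigma> \<mu>" if s: "\<sigma> \<in> {..n} \<rightarrow> Omega" for \<sigma>
  proof -
    interpret PS: prob_space "PiM {..n} \<sigma>" by (rule prob_PiM_Omega[OF s])
    have meas: "(\<lambda>p. \<integral>x. D n x p \<partial>PiM {..n} \<sigma>) \<in> borel_measurable borel"
      using D_meas2[OF s] by (intro PS.borel_measurable_lebesgue_integral) simp
    have e1: "E n \<sigma> \<mu> = (\<Sum>p\<in>P. w p * (\<integral>x. D n x p \<partial>PiM {..n} \<sigma>))"
      unfolding E_def by (rule int[OF meas])
    have e2: "(\<Sum>p\<in>P. w p * (\<integral>x. D n x p \<partial>PiM {..n} \<sigma>)) = (\<Sum>p\<in>P. (\<integral>x. w p * D n x p \<partial>PiM {..n} \<sigma>))"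
      by simp
    have ip: "integrable (PiM {..n} \<sigma>) (\<lambda>x. w p * D n x p)" if "p \<in> P" for p
      using P01 that by (intro integrable_mult_right D_integrable[OF s]) auto
    have e3: "(\<integral>x. (\<Sum>p\<in>P. w p * D n x p) \<partial>PiM {..n} \<sigma>) = (\<Sum>p\<in>P. (\<integral>x. w p * D n x p \<partial>PiM {..n} \<sigma>))"
      by (rule Bochner_Integration.integral_sum) (rule ip)
    have eq: "E n \<sigma> \<mu> = (\<integral>x. (\<Sum>p\<in>P. w p * D n x p) \<partial>PiM {..n} \<sigma>)"
      unfolding e1 e2 e3 ..
    have "c \<le> (\<integral>x. (\<Sum>p\<in>P. w p * D n x p) \<partial>PiM {..n} \<sigma>)"
    proof (rule PS.integral_ge_const)
      show "integrable (PiM {..n} \<sigma>) (\<lambda>x. \<Sum>p\<in>P. w p * D n x p)"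
        by (rule Bochner_Integration.integrable_sum) (rule ip)
      show "AE x in PiM {..n} \<sigma>. c \<le> (\<Sum>p\<in>P. w p * D n x p)"
        using PiM_AE[OF s] by (rule AE_mp) (use good in auto)
    qed
    then show ?thesis using eq by simp
  qed
  moreover have "(\<lambda>_. return borel 0) \<in> {..n} \<rightarrow> Omega" by (auto intro: return_Omega)
  ultimately have "c \<le> game_value n \<mu>"
    unfolding game_value_def by (intro cINF_greatest) auto
  then show ?thesis using mu by blast
qed



lemma D_meas_p: "(\<lambda>p. D n x p) \<in> borel_measurable borel"
  unfolding D_def by measurable

theorem lemma4p4:
  fixes n :: nat and \<mu>star :: "real measure" and a :: "nat \<Rightarrow> real"
  assumes "n \<ge> 1"
    and "\<mu>star \<in> Omega"
    and "\<forall>\<mu>\<in>Omega. game_value n \<mu> \<le> game_value n \<mu>star"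
    and "a \<in> {..n} \<rightarrow> {0..1}"
    and "\<forall>x\<in>{..n} \<rightarrow> {0..1}. supnorm n a \<le> supnorm n x"
  shows "msupport \<mu>star \<subseteq> {p\<in>{0..1}. D n a p = supnorm n a}"
proof -
  note mustar = assms(2) and opt = assms(3) and aK = assms(4) and amin = assms(5)
  define K where "K = {..n} \<rightarrow> {0..(1::real)}"
  define V where "V = supnorm n a"
  define L where "L = 2 ^ n * real (n + 1)"
  have Lpos: "L > 0" unfolding L_def by simp
  have bdd: "bdd_above ((\<lambda>p. \<bar>D n x p\<bar>) ` {0..1})" if "x \<in> K" for x
    using that D_nonneg D_le1 unfolding K_def by (intro bdd_aboveI[where M=1]) auto
  have f_le: "D n a p \<le> V" if "p \<in> {0..1}" for p
  proof -
    have "\<bar>D n a p\<bar> \<le> V" unfolding V_def supnorm_def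
      using bdd[of a] aK that unfolding K_def by (intro cSUP_upper) auto
    then show ?thesis by simp
  qed
  have ge: "V - \<epsilon> \<le> game_value n \<mu>star" if "\<epsilon> > 0" for \<epsilon>
  proof -
    define \<delta> where "\<delta> = \<epsilon> / 4"
    have dpos: "\<delta> > 0" using that unfolding \<delta>_def by simp
    obtain N :: nat where N: "L / \<delta> < real N" using reals_Archimedean2 by blast
    have Npos: "N > 0" using N Lpos dpos
      by (metis divide_pos_pos gr0I not_less_iff_gr_or_eq of_nat_0)
    have LN: "L / real N < \<delta>" using N Npos dpos Lpos
      by (simp add: divide_less_eq mult.commute pos_divide_less_eq)
    define P where "P = (\<lambda>j. real j / real N) ` {..N}"
    have finP: "finite P" "P \<noteq> {}" unfolding P_def by auto
    have P01: "P \<subseteq> {0..1}" unfolding P_def using Npos by auto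
    have cover: "\<exists>p\<in>P. V - 2 * \<delta> \<le> D n x p" if x: "x \<in> K" for x
    proof -
      have "V \<le> supnorm n x" using amin x unfolding V_def K_def by blast
      then have "V - \<delta> < (SUP p\<in>{0..1}. \<bar>D n x p\<bar>)" using dpos unfolding supnorm_def by simp
      then obtain q where q: "q \<in> {0..1}" "V - \<delta> < \<bar>D n x q\<bar>"
        using bdd[OF x] by (subst (asm) less_cSUP_iff) auto
      then have q': "V - \<delta> < D n x q" using D_nonneg by auto
      define j where "j = nat \<lfloor>q * real N\<rfloor>"
      have qN: "0 \<le> q * real N" "q * real N \<le> real N" using q Npos by auto
      have j1: "real j \<le> q * real N" "q * real N < real j + 1"
        using qN unfolding j_def by linarith+
      have jN: "j \<le> N" using j1 qN by linarith
      define p where "p = real j / real N"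
      have pP: "p \<in> P" unfolding P_def p_def using jN by auto
      have p01: "p \<in> {0..1}" using pP P01 by auto
      have "\<bar>p - q\<bar> \<le> 1 / real N"
      proof -
        have "\<bar>p - q\<bar> = \<bar>real j - q * real N\<bar> / real N"
          unfolding p_def using Npos by (simp add: field_simps)
        also have "\<dots> \<le> 1 / real N" using j1 Npos by (intro divide_right_mono) auto
        finally show ?thesis .
      qed
      have "\<bar>D n x p - D n x q\<bar> \<le> L * \<bar>p - q\<bar>"
        unfolding L_def using x p01 q(1) unfolding K_def by (intro D_lip) auto
      also have "\<dots> \<le> L * (1 / real N)" using \<open>\<bar>p - q\<bar> \<le> 1 / real N\<close> Lpos by (intro mult_left_mono) auto
      also have "\<dots> < \<delta>" using LN by simp
      finally have "V - 2 * \<delta> \<le> D n x p" using q' by linarith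
      then show ?thesis using pP by blast
    qed
    have "K \<noteq> {}" using aK unfolding K_def by blast
    have g01: "0 \<le> D n x p \<and> D n x p \<le> 1" if "x \<in> K" "p \<in> P" for x p
      using that P01 D_nonneg D_le1 unfolding K_def by auto
    have avg: "\<exists>y\<in>K. \<forall>p\<in>P. real T * D n y p \<le> (\<Sum>t<T. D n (xs t) p)"
      if "T > 0" "\<forall>t<T. xs t \<in> K" for T xs
    proof -
      define y where "y = (\<lambda>k. (\<Sum>t<T. xs t k) / real T)"
      have "y \<in> K"
      proof -
        have "0 \<le> y k \<and> y k \<le> 1" if "k \<le> n" for k
        proof -
          have "0 \<le> (\<Sum>t<T. xs t k)" using \<open>\<forall>t<T. xs t \<in> K\<close> that unfolding K_def
            by (intro sum_nonneg) (fastforce simp: Pi_def)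
          moreover have "(\<Sum>t<T. xs t k) \<le> (\<Sum>t<T. 1)" using \<open>\<forall>t<T. xs t \<in> K\<close> that unfolding K_def
            by (intro sum_mono) (fastforce simp: Pi_def)
          ultimately show ?thesis unfolding y_def using \<open>T > 0\<close> by (auto simp: divide_le_eq)
        qed
        then show ?thesis unfolding K_def by auto
      qed
      moreover have "\<forall>p\<in>P. real T * D n y p \<le> (\<Sum>t<T. D n (xs t) p)"
        using that P01 unfolding y_def K_def by (auto intro!: D_avg)
      ultimately show ?thesis by blast
    qed
    obtain w where w: "\<forall>p\<in>P. 0 \<le> w p" "(\<Sum>p\<in>P. w p) = 1"
      "\<forall>x\<in>K. V - 2 * \<delta> - \<delta> \<le> (\<Sum>p\<in>P. w p * D n x p)"
      using hedge_core[of P K "\<lambda>x p. D n x p" "V - 2 * \<delta>" \<delta>, OF finP \<open>K \<noteq> {}\<close> g01 avg cover dpos]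
      by blast
    obtain \<mu> where "\<mu> \<in> Omega" "V - 2 * \<delta> - \<delta> \<le> game_value n \<mu>"
      using game_value_ge[OF finP(1) P01 w(1) w(2)] w(3) unfolding K_def by blast
    then have "V - 2 * \<delta> - \<delta> \<le> game_value n \<mu>star" using opt by force
    then show ?thesis unfolding \<delta>_def using that by linarith
  qed
  have V_le: "V \<le> game_value n \<mu>star"
  proof (rule field_le_epsilon)
    fix e :: real assume "0 < e"
    then show "V \<le> game_value n \<mu>star + e" using ge[OF \<open>0 < e\<close>] by linarith
  qed
  have gv: "game_value n \<mu>star \<le> (\<integral>p. D n a p \<partial>\<mu>star)"
    by (rule game_value_le[OF mustar aK])
  interpret PS: prob_space \<mu>star using Omega_D[OF mustar] by auto
  have setsb: "sets \<mu>star = sets borel" using Omega_D[OF mustar] by auto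
  have AE01: "AE p in \<mu>star. p \<in> {0..1}" by (rule Omega_AE[OF mustar])
  have fmeas: "(\<lambda>p. D n a p) \<in> borel_measurable \<mu>star"
    using D_meas_p measurable_cong_sets[OF setsb refl] by blast
  have fint: "integrable \<mu>star (\<lambda>p. D n a p)"
  proof (rule PS.integrable_const_bound[where B=1])
    show "AE x in \<mu>star. norm (D n a x) \<le> 1"
      using AE01 by (rule AE_mp) (use D_nonneg D_le1 aK in auto)
  qed (rule fmeas)
  have ballm: "emeasure \<mu>star (ball x e) = emeasure \<mu>star (ball x e \<inter> {0..1})" for x e
    using AE01 setsb by (intro emeasure_eq_AE) auto
  show ?thesis
  proof
    fix x assume xs: "x \<in> msupport \<mu>star"
    have x01: "x \<in> {0..1}"
    proof (rule ccontr)
      assume "x \<notin> {0..1}"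
      then have "ball x (if x < 0 then - x else x - 1) \<inter> {0..1} = {}" "0 < (if x < 0 then - x else x - 1)"
        by (auto simp: dist_real_def)
      then show False using xs ballm unfolding msupport_def by fastforce
    qed
    have "D n a x = V"
    proof (rule ccontr)
      assume "D n a x \<noteq> V"
      then have lt: "D n a x < V" using f_le x01 by force
      define \<eta> where "\<eta> = V - D n a x"
      have etap: "\<eta> > 0" using lt unfolding \<eta>_def by simp
      define e where "e = \<eta> / (2 * L)"
      have ep: "e > 0" using etap Lpos unfolding e_def by simp
      define B where "B = ball x e \<inter> {0..1}"
      have Bs: "B \<in> sets \<mu>star" unfolding B_def using setsb by simp
      have "emeasure \<mu>star B > 0" using xs ep ballm unfolding msupport_def B_def by auto
      then have mB: "measure \<mu>star B > 0"
        by (simp add: PS.emeasure_eq_measure)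
      have fB: "D n a p \<le> V - \<eta> / 2" if "p \<in> B" for p
      proof -
        have p: "p \<in> {0..1}" "dist x p < e" using that unfolding B_def by auto
        have "\<bar>D n a p - D n a x\<bar> \<le> L * \<bar>p - x\<bar>"
          unfolding L_def using aK p x01 by (intro D_lip) auto
        also have "\<dots> \<le> L * e" using p(2) Lpos by (intro mult_left_mono) (auto simp: dist_real_def)
        also have "\<dots> = \<eta> / 2" unfolding e_def using Lpos by simp
        finally have "D n a p - D n a x \<le> \<eta> / 2" using abs_ge_self order_trans by blast
        then show ?thesis unfolding \<eta>_def by (simp add: field_simps)
      qed
      have "(\<integral>p. D n a p \<partial>\<mu>star) \<le> (\<integral>p. V - \<eta> / 2 * indicator B p \<partial>\<mu>star)"
      proof (rule integral_mono_AE[OF fint])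
        show "integrable \<mu>star (\<lambda>p. V - \<eta> / 2 * indicator B p)"
          using Bs by (intro Bochner_Integration.integrable_diff integrable_mult_right integrable_real_indicator) (auto simp: PS.emeasure_eq_measure)
        show "AE p in \<mu>star. D n a p \<le> V - \<eta> / 2 * indicator B p"
          using AE01 by (rule AE_mp) (auto intro!: AE_I2 f_le fB split: split_indicator)
      qed
      also have "\<dots> = V - \<eta> / 2 * measure \<mu>star B"
        using Bs by (subst Bochner_Integration.integral_diff) (auto intro!: integrable_real_indicator simp: PS.emeasure_eq_measure PS.prob_space)
      also have "\<dots> < V" using etap mB by simp
      finally show False using V_le gv by linarith
    qed
    then show "x \<in> {p \<in> {0..1}. D n a p = supnorm n a}" using x01 unfolding V_def by simp
  qed
qed


end
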